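(* For every $N\ge 1$ and every integer $n\ge 1$, $$\Pr[\mathcal{N}_1(N)=n]=\frac{1}{(N-1)!}\left\langle {N-1\atop n-1}\right\rangle ,$$ where $\left\langle {m\atop j}\right\rangle$ is the Eulerian number, i.e. the number of permutations of $\{1,\dots,m\}$ with exactly $j$ descents (with $\left\langle {0\atop 0}\right\rangle=1$ and $\left\langle {m\atop j}\right\rangle=0$ for $j<0$ or $j\ge \max(m,1)$).
   Context: A random recursive hypergraph (RRH) is the random hypergraph process defined as follows. At size $N=1$ it has vertex set $\{v_1\}$ and edge set $\{\{v_1\}\}$. Given the hypergraph of size $N$ (vertices $v_1,\dots,v_N$, exactly $N$ edges), one chooses an existing edge $e$ uniformly at random, independently of the past, and adds a new vertex $v_{N+1}$ together with the new edge $e\cup\{v_{N+1}\}$; this gives the hypergraph of size $N+1$. The degree $d(v)$ of a vertex $v$ is the number of edges containing $v$. $\mathcal{N}_k(N)$ denotes the number of vertices of degree $k$ in the RRH of size $N$. *)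

theory Defs
  imports "HOL-Probability.Probability_Mass_Function" "HOL-Combinatorics.Permutations"
begin

text \<open>A hypergraph of size N is represented by the list of its N edges
  (edge i is the (i+1)-th edge created); vertices are 1..N, vertex v_k is k.\<close>

fun rrh :: "nat \<Rightarrow> nat set list pmf" where
  "rrh 0 = return_pmf []"
| "rrh (Suc 0) = return_pmf [{1}]"
| "rrh (Suc (Suc m)) =
     bind_pmf (rrh (Suc m)) (\<lambda>H.
       map_pmf (\<lambda>i. H @ [insert (Suc (Suc m)) (H ! i)]) (pmf_of_set {0..<length H}))"

definition hdeg :: "nat set list \<Rightarrow> nat \<Rightarrow> nat" where
  "hdeg H v = card {i. i < length H \<and> v \<in> H ! i}"

definition numdeg :: "nat \<Rightarrow> nat \<Rightarrow> nat set list \<Rightarrow> nat" where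
  "numdeg N k H = card {v \<in> {1..N}. hdeg H v = k}"

definition eulerian :: "nat \<Rightarrow> nat \<Rightarrow> nat" where
  "eulerian m j = card {p. p permutes {1..m} \<and>
      card {i \<in> {1..<m}. p (Suc i) < p i} = j}"

end

theory Submission
  imports Defs "HOL-Combinatorics.Multiset_Permutations"
begin

definition des :: "nat list \<Rightarrow> nat" where
  "des xs = card {i. Suc i < length xs \<and> xs ! Suc i < xs ! i}"

lemma des_Nil[simp]: "des [] = 0" by (simp add: des_def)
lemma des_single[simp]: "des [x] = 0" by (simp add: des_def)
lemma des_Cons2: "des (x # y # zs) = (if y < x then 1 else 0) + des (y # zs)"
proof -
  have "{i. Suc i < length (x#y#zs) \<and> (x#y#zs) ! Suc i < (x#y#zs) ! i}
      = (if y < x then {0} else {}) \<union> Suc ` {i. Suc i < length (y#zs) \<and> (y#zs) ! Suc i < (y#zs) ! i}"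
    (is "?L = ?R")
  proof (intro set_eqI iffI)
    fix i assume "i \<in> ?L" thus "i \<in> ?R" by (cases i) auto
  qed (auto split: if_splits)
  moreover have "finite {i. Suc i < length (y#zs) \<and> (y#zs) ! Suc i < (y#zs) ! i}" by simp
  ultimately show ?thesis unfolding des_def
    by (auto simp: card_image)
qed

definition ins :: "nat \<Rightarrow> nat \<Rightarrow> nat list \<Rightarrow> nat list" where
  "ins a j xs = take j xs @ a # drop j xs"

lemma ins_0[simp]: "ins a 0 xs = a # xs" by (simp add: ins_def)
lemma ins_Suc[simp]: "ins a (Suc j) (x # xs) = x # ins a j xs" by (simp add: ins_def)
lemma ins_Nil[simp]: "ins a j [] = [a]" by (simp add: ins_def)

lemma des_ins:
  assumes "distinct xs" "\<forall>x\<in>set xs. x < a" "j \<le> length xs"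
  shows "des (ins a j xs) = des xs + (if j < length xs \<and> (j = 0 \<or> xs ! (j - 1) < xs ! j) then 1 else 0)"
  using assms
proof (induction xs arbitrary: j)
  case Nil thus ?case by simp
next
  case (Cons x xs)
  show ?case
  proof (cases j)
    case 0 thus ?thesis using Cons.prems by (cases xs) (auto simp: des_Cons2)
  next
    case (Suc j')
    show ?thesis
    proof (cases xs)
      case Nil thus ?thesis using Cons.prems Suc by (auto simp: des_Cons2)
    next
      fix y ys assume Cons2: "xs = y # ys"
      show ?thesis
      proof (cases j')
        case 0 thus ?thesis using Cons.prems Suc Cons2 by (auto simp: des_Cons2)
      next
        case (Suc j'')
        have IH: "des (ins a j' xs) = des xs + (if j' < length xs \<and> (j' = 0 \<or> xs ! (j' - 1) < xs ! j') then 1 else 0)"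
          using Cons.IH Cons.prems \<open>j = Suc j'\<close> by auto
        show ?thesis using IH Cons2 Suc \<open>j = Suc j'\<close> by (simp add: des_Cons2)
      qed
    qed
  qed
qed

lemma card_Z:
  assumes "distinct xs"
  shows "card {j\<in>{0..length xs}. \<not> (j < length xs \<and> (j = 0 \<or> xs ! (j - 1) < xs ! j))} = des xs + 1"
proof -
  let ?D = "{i. Suc i < length xs \<and> xs ! Suc i < xs ! i}"
  have "{j\<in>{0..length xs}. \<not> (j < length xs \<and> (j = 0 \<or> xs ! (j - 1) < xs ! j))}
        = insert (length xs) (Suc ` ?D)" (is "?L = ?R")
  proof (intro set_eqI iffI)
    fix j assume j: "j \<in> ?L"
    show "j \<in> ?R"
    proof (cases "j = length xs")
      case False
      with j obtain i where i: "j = Suc i" "Suc i < length xs" "\<not> xs ! i < xs ! Suc i"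
        by (cases j) auto
      have "xs ! i \<noteq> xs ! Suc i" using assms i by (simp add: nth_eq_iff_index_eq)
      with i show ?thesis by auto
    qed simp
  next
    fix j assume "j \<in> ?R"
    thus "j \<in> ?L" by auto
  qed
  moreover have "length xs \<notin> Suc ` ?D" by auto
  moreover have "finite ?D" by (rule finite_subset[of _ "{..<length xs}"]) auto
  ultimately show ?thesis by (simp add: card_image des_def)
qed

lemma card_ins_des:
  assumes "distinct xs" "\<forall>x\<in>set xs. x < a"
  shows "card {j\<in>{0..length xs}. des (ins a j xs) = k}
       = (if k = des xs then des xs + 1 else 0) + (if k = des xs + 1 then length xs - des xs else 0)"
proof -
  define P where "P j \<longleftrightarrow> j < length xs \<and> (j = 0 \<or> xs ! (j - 1) < xs ! j)" for j
  have eq: "\<And>j. j \<in> {0..length xs} \<Longrightarrow> des (ins a j xs) = des xs + (if P j then 1 else 0)"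
    using des_ins[OF assms] by (simp add: P_def)
  have Z: "card {j\<in>{0..length xs}. \<not> P j} = des xs + 1" using card_Z[OF assms(1)] by (simp add: P_def)
  have C: "card {j\<in>{0..length xs}. P j} = length xs - des xs"
  proof -
    have "card {j\<in>{0..length xs}. P j} + card {j\<in>{0..length xs}. \<not> P j} = card {0..length xs}"
    proof (subst card_Un_disjoint[symmetric])
      have "{j\<in>{0..length xs}. P j} \<union> {j\<in>{0..length xs}. \<not> P j} = {0..length xs}" by auto
      thus "card ({j\<in>{0..length xs}. P j} \<union> {j\<in>{0..length xs}. \<not> P j}) = card {0..length xs}" by simp
    qed auto
    thus ?thesis using Z by simp
  qed
  show ?thesis
  proof (cases "k = des xs")
    case True
    hence "{j\<in>{0..length xs}. des (ins a j xs) = k} = {j\<in>{0..length xs}. \<not> P j}" using eq by auto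
    thus ?thesis using Z True by simp
  next
    case False
    show ?thesis
    proof (cases "k = des xs + 1")
      case True
      hence "{j\<in>{0..length xs}. des (ins a j xs) = k} = {j\<in>{0..length xs}. P j}" using eq by (auto split: if_splits)
      thus ?thesis using C True by simp
    next
      case F2: False
      hence "{j\<in>{0..length xs}. des (ins a j xs) = k} = {}" using eq False by auto
      thus ?thesis using False F2 by simp
    qed
  qed
qed

abbreviation S :: "nat \<Rightarrow> nat list set" where
  "S m \<equiv> permutations_of_set {1..m}"

definition E :: "nat \<Rightarrow> nat \<Rightarrow> nat" where
  "E m k = card {xs \<in> S m. des xs = k}"

lemma S_length: "xs \<in> S m \<Longrightarrow> length xs = m"
  by (metis permutations_of_setD card_atLeastAtMost diff_Suc_1 distinct_card)

lemma ins_bij: "bij_betw (\<lambda>(xs, j). ins (Suc m) j xs) (S m \<times> {0..m}) (S (Suc m))"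
proof (rule bij_betw_imageI)
  show "inj_on (\<lambda>(xs, j). ins (Suc m) j xs) (S m \<times> {0..m})"
  proof (rule inj_onI, clarify)
    fix xs j xs' j'
    assume a: "xs \<in> S m" "j \<in> {0..m}" "xs' \<in> S m" "j' \<in> {0..m}"
      and e: "ins (Suc m) j xs = ins (Suc m) j' xs'"
    have "Suc m \<notin> set xs" "Suc m \<notin> set xs'" using a by (auto dest: permutations_of_setD)
    hence "Suc m \<notin> set (take j xs)" "Suc m \<notin> set (drop j xs)"
      by (meson in_set_takeD in_set_dropD)+
    with e have "take j xs = take j' xs' \<and> drop j xs = drop j' xs'"
      unfolding ins_def using append_Cons_eq_iff by metis
    moreover have "length xs = m" "length xs' = m" using a by (auto simp: S_length)
    ultimately show "xs = xs' \<and> j = j'" using a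
      by (metis append_take_drop_id atLeastAtMost_iff length_take min.absorb2)
  qed
next
  show "(\<lambda>(xs, j). ins (Suc m) j xs) ` (S m \<times> {0..m}) = S (Suc m)"
  proof (intro set_eqI iffI)
    fix ys assume "ys \<in> (\<lambda>(xs, j). ins (Suc m) j xs) ` (S m \<times> {0..m})"
    then obtain xs j where a: "xs \<in> S m" "j \<le> m" "ys = ins (Suc m) j xs" by auto
    have "set ys = insert (Suc m) (set xs)" using a(3)
      by (metis ins_def append_take_drop_id set_append list.set(2) Un_insert_right Un_insert_left insert_commute)
    moreover have "distinct ys"
    proof -
      have dd: "distinct (take j xs @ drop j xs)" using permutations_of_setD[OF a(1)] by simp
      have nin: "Suc m \<notin> set xs" using permutations_of_setD[OF a(1)] by auto
      show ?thesis using dd nin unfolding a(3) ins_def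
        by (auto dest: in_set_takeD in_set_dropD simp del: append_take_drop_id)
    qed
    ultimately show "ys \<in> S (Suc m)" using permutations_of_setD[OF a(1)] by (auto intro!: permutations_of_setI)
  next
    fix ys assume ys: "ys \<in> S (Suc m)"
    hence "Suc m \<in> set ys" by (auto dest: permutations_of_setD)
    then obtain as bs where ab: "ys = as @ Suc m # bs" by (meson split_list)
    have d: "distinct ys" "set ys = {1..Suc m}" using ys by (auto dest: permutations_of_setD)
    have "as @ bs \<in> S m"
    proof (rule permutations_of_setI)
      show "distinct (as @ bs)" using d ab by auto
      have "set (as @ bs) = set ys - {Suc m}" using d ab by auto
      also have "\<dots> = {1..m}" using d(2) by auto
      finally show "set (as @ bs) = {1..m}" .
    qed
    moreover have "length as \<le> m" using S_length[OF ys] ab by simp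
    moreover have "ys = ins (Suc m) (length as) (as @ bs)" using ab by (simp add: ins_def)
    ultimately show "ys \<in> (\<lambda>(xs, j). ins (Suc m) j xs) ` (S m \<times> {0..m})" by force
  qed
qed

lemma sum_if_const_card: "finite A \<Longrightarrow> (\<Sum>x\<in>A. if P x then c else 0) = c * card {x\<in>A. P x}"
  by (simp add: sum.inter_filter[symmetric])

lemma bij_filter_card: "bij_betw f A B \<Longrightarrow> card {y\<in>B. P y} = card {x\<in>A. P (f x)}"
proof -
  assume b: "bij_betw f A B"
  have "bij_betw f {x\<in>A. P (f x)} {y\<in>B. P y}"
    unfolding bij_betw_def
  proof
    show "inj_on f {x \<in> A. P (f x)}" using b by (auto simp: bij_betw_def intro: inj_on_subset)
    show "f ` {x \<in> A. P (f x)} = {y \<in> B. P y}" using b by (fastforce simp: bij_betw_def)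
  qed
  thus ?thesis by (simp add: bij_betw_same_card)
qed

lemma E_rec: "E (Suc m) k = (k + 1) * E m k + (if 0 < k then (Suc m - k) * E m (k - 1) else 0)"
proof -
  let ?g = "\<lambda>(xs, j). ins (Suc m) j xs"
  have "E (Suc m) k = card {p \<in> S m \<times> {0..m}. des (?g p) = k}"
    unfolding E_def by (rule bij_filter_card[OF ins_bij])
  also have "{p \<in> S m \<times> {0..m}. des (?g p) = k} = Sigma (S m) (\<lambda>xs. {j\<in>{0..length xs}. des (ins (Suc m) j xs) = k})"
  proof (intro set_eqI iffI)
    fix p assume "p \<in> {p \<in> S m \<times> {0..m}. des (?g p) = k}"
    then obtain xs j where "p = (xs, j)" "xs \<in> S m" "j \<le> m" "des (ins (Suc m) j xs) = k" by auto
    thus "p \<in> Sigma (S m) (\<lambda>xs. {j\<in>{0..length xs}. des (ins (Suc m) j xs) = k})"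
      using S_length by simp
  next
    fix p assume "p \<in> Sigma (S m) (\<lambda>xs. {j\<in>{0..length xs}. des (ins (Suc m) j xs) = k})"
    then obtain xs j where "p = (xs, j)" "xs \<in> S m" "j \<le> length xs" "des (ins (Suc m) j xs) = k" by auto
    thus "p \<in> {p \<in> S m \<times> {0..m}. des (?g p) = k}"
      using S_length by simp
  qed
  also have "card \<dots> = (\<Sum>xs\<in>S m. card {j\<in>{0..length xs}. des (ins (Suc m) j xs) = k})"
    by (rule card_SigmaI) auto
  also have "\<dots> = (\<Sum>xs\<in>S m. (if des xs = k then k + 1 else 0) + (if des xs + 1 = k then Suc m - k else 0))"
  proof (rule sum.cong[OF refl])
    fix xs assume xs: "xs \<in> S m"
    have "distinct xs" "\<forall>x\<in>set xs. x < Suc m" using permutations_of_setD[OF xs] by auto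
    from card_ins_des[OF this, of k] show "card {j\<in>{0..length xs}. des (ins (Suc m) j xs) = k}
        = (if des xs = k then k + 1 else 0) + (if des xs + 1 = k then Suc m - k else 0)"
      using S_length[OF xs] by auto
  qed
  also have "\<dots> = (k + 1) * E m k + (Suc m - k) * card {xs \<in> S m. des xs + 1 = k}"
    by (simp add: sum.distrib sum_if_const_card E_def)
  also have "card {xs \<in> S m. des xs + 1 = k} = (if 0 < k then E m (k - 1) else 0)"
  proof (cases k)
    case 0 thus ?thesis by simp
  next
    case (Suc k') thus ?thesis unfolding E_def by simp
  qed
  finally show ?thesis by simp
qed

lemma E_0: "E 0 k = (if k = 0 then 1 else 0)"
  by (simp add: E_def cong: conj_cong)


lemma map_upt_nth: "i < m \<Longrightarrow> map p [1..<Suc m] ! i = p (Suc i)"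
  by (simp del: upt_Suc)

lemma perm_list_bij: "bij_betw (\<lambda>p. map p [1..<Suc m]) {p. p permutes {1..m}} (S m)"
proof (rule bij_betw_imageI)
  show "inj_on (\<lambda>p. map p [1..<Suc m]) {p. p permutes {1..m}}"
  proof (rule inj_onI)
    fix p q assume p: "p \<in> {p. p permutes {1..m}}" and q: "q \<in> {p. p permutes {1..m}}"
      and e: "map p [1..<Suc m] = map q [1..<Suc m]"
    show "p = q"
    proof
      fix x show "p x = q x"
      proof (cases "x \<in> {1..m}")
        case True
        hence "x \<in> set [1..<Suc m]" by auto
        thus ?thesis using e by (metis map_eq_conv)
      next
        case False thus ?thesis using p q by (simp add: permutes_not_in)
      qed
    qed
  qed
next
  show "(\<lambda>p. map p [1..<Suc m]) ` {p. p permutes {1..m}} = S m"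
  proof (intro set_eqI iffI)
    fix xs assume "xs \<in> (\<lambda>p. map p [1..<Suc m]) ` {p. p permutes {1..m}}"
    then obtain p where p: "p permutes {1..m}" "xs = map p [1..<Suc m]" by auto
    have "distinct xs" using p permutes_inj_on[OF p(1)]
      by (simp add: distinct_map atLeastLessThanSuc_atLeastAtMost)
    moreover have "set xs = {1..m}" using p permutes_image[OF p(1)]
      by (simp add: atLeastLessThanSuc_atLeastAtMost del: upt_Suc)
    ultimately show "xs \<in> S m" by (auto intro: permutations_of_setI)
  next
    fix xs assume xs: "xs \<in> S m"
    have d: "distinct xs" "set xs = {1..m}" "length xs = m" using xs permutations_of_setD S_length by auto
    define p where "p i = (if i \<in> {1..m} then xs ! (i - 1) else i)" for i
    have "bij_betw p {1..m} {1..m}"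
    proof (rule bij_betw_imageI)
      show "inj_on p {1..m}"
        using d by (auto simp: inj_on_def p_def nth_eq_iff_index_eq)
      show "p ` {1..m} = {1..m}"
      proof (intro set_eqI iffI)
        fix y assume "y \<in> p ` {1..m}"
        then obtain i where "i \<in> {1..m}" "y = xs ! (i - 1)" by (auto simp: p_def)
        thus "y \<in> {1..m}" using d by (metis Suc_diff_1 Suc_le_eq atLeastAtMost_iff nth_mem le_less_trans linorder_not_le not_one_le_zero)
      next
        fix y assume "y \<in> {1..m}"
        then obtain i where i: "i < m" "y = xs ! i" using d by (metis in_set_conv_nth)
        hence "Suc i \<in> {1..m}" "p (Suc i) = y" by (auto simp: p_def)
        thus "y \<in> p ` {1..m}" by force
      qed
    qed
    hence "p permutes {1..m}" by (rule bij_imp_permutes) (auto simp: p_def)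
    moreover have "map p [1..<Suc m] = xs"
    proof (rule nth_equalityI)
      show "length (map p [1..<Suc m]) = length xs" using d by (simp del: upt_Suc)
      fix i assume "i < length (map p [1..<Suc m])"
      hence i: "i < m" by (simp del: upt_Suc)
      show "map p [1..<Suc m] ! i = xs ! i" using i by (simp add: map_upt_nth p_def del: upt_Suc)
    qed
    ultimately show "xs \<in> (\<lambda>p. map p [1..<Suc m]) ` {p. p permutes {1..m}}" by force
  qed
qed

lemma des_map: "des (map p [1..<Suc m]) = card {i \<in> {1..<m}. p (Suc i) < p i}"
proof -
  have "{i \<in> {1..<m}. p (Suc i) < p i} = Suc ` {i. Suc i < length (map p [1..<Suc m]) \<and> (map p [1..<Suc m]) ! Suc i < (map p [1..<Suc m]) ! i}"
  proof (intro set_eqI iffI)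
    fix i assume "i \<in> {i \<in> {1..<m}. p (Suc i) < p i}"
    thus "i \<in> Suc ` {i. Suc i < length (map p [1..<Suc m]) \<and> (map p [1..<Suc m]) ! Suc i < (map p [1..<Suc m]) ! i}"
      by (cases i) (auto simp del: upt_Suc)
  qed (auto simp del: upt_Suc)
  moreover have "finite {i. Suc i < length (map p [1..<Suc m]) \<and> (map p [1..<Suc m]) ! Suc i < (map p [1..<Suc m]) ! i}"
    by (rule finite_subset[of _ "{..<m}"]) (auto simp del: upt_Suc)
  ultimately show ?thesis by (simp add: des_def card_image del: upt_Suc)
qed

lemma eulerian_E: "eulerian m k = E m k"
proof -
  have "E m k = card {p \<in> {p. p permutes {1..m}}. des (map p [1..<Suc m]) = k}"
    unfolding E_def by (rule bij_filter_card[OF perm_list_bij])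
  thus ?thesis unfolding eulerian_def des_map by simp
qed


definition hinv :: "nat \<Rightarrow> nat set list \<Rightarrow> bool" where
  "hinv N H \<longleftrightarrow> length H = N \<and> (\<forall>i<N. H ! i \<subseteq> {1..Suc i} \<and> Suc i \<in> H ! i)"

lemma rrh_inv: "H \<in> set_pmf (rrh (Suc m)) \<Longrightarrow> hinv (Suc m) H"
proof (induction m arbitrary: H)
  case 0 thus ?case by (auto simp: hinv_def)
next
  case (Suc m)
  from Suc.prems obtain H0 where H0: "H0 \<in> set_pmf (rrh (Suc m))"
    and H1: "H \<in> set_pmf (map_pmf (\<lambda>i. H0 @ [insert (Suc (Suc m)) (H0 ! i)]) (pmf_of_set {0..<length H0}))"
    by (simp only: rrh.simps set_bind_pmf) blast
  have I: "hinv (Suc m) H0" using Suc.IH[OF H0] .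
  hence len: "length H0 = Suc m" by (simp add: hinv_def)
  from H1 obtain i where i: "i < length H0" and H: "H = H0 @ [insert (Suc (Suc m)) (H0 ! i)]"
    unfolding set_map_pmf len by (subst (asm) set_pmf_of_set) auto
  show ?case unfolding hinv_def
  proof (rule conjI)
    show "length H = Suc (Suc m)" using I H by (simp add: hinv_def)
  next
    show "\<forall>j<Suc (Suc m). H ! j \<subseteq> {1..Suc j} \<and> Suc j \<in> H ! j"
    proof (intro allI impI)
    fix j assume j: "j < Suc (Suc m)"
    show "H ! j \<subseteq> {1..Suc j} \<and> Suc j \<in> H ! j"
    proof (cases "j < Suc m")
      case True thus ?thesis using I H by (simp add: hinv_def nth_append)
    next
      case False
      hence "j = Suc m" using j by simp
      have "H0 ! i \<subseteq> {1..Suc i}" "i < Suc m" using I i by (auto simp: hinv_def)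
      hence sub: "H0 ! i \<subseteq> {1..Suc (Suc m)}" by auto
      show ?thesis using H len sub \<open>j = Suc m\<close> by (simp add: nth_append)
    qed
    qed
  qed
qed

lemma hinv_D: "hinv N H \<Longrightarrow> i < N \<Longrightarrow> H ! i \<subseteq> {1..Suc i} \<and> Suc i \<in> H ! i"
  by (simp add: hinv_def)
lemma hinv_len: "hinv N H \<Longrightarrow> length H = N"
  by (simp add: hinv_def)

lemma finite_hdeg_set: "finite {i. i < length H \<and> v \<in> H ! i}" by simp

lemma hdeg_ge1: "hinv N H \<Longrightarrow> v \<in> {1..N} \<Longrightarrow> hdeg H v \<ge> 1"
proof -
  assume I: "hinv N H" and v: "v \<in> {1..N}"
  have "v - 1 < N" using v by auto
  from hinv_D[OF I this] have "v \<in> H ! (v - 1)" using v by auto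
  hence "v - 1 \<in> {i. i < length H \<and> v \<in> H ! i}" using hinv_len[OF I] v by auto
  hence "{i. i < length H \<and> v \<in> H ! i} \<noteq> {}" by blast
  thus ?thesis unfolding hdeg_def by (simp add: Suc_le_eq card_gt_0_iff)
qed

lemma hdeg_ge2: "hinv N H \<Longrightarrow> i < N \<Longrightarrow> v \<in> H ! i \<Longrightarrow> v \<noteq> Suc i \<Longrightarrow> hdeg H v \<ge> 2"
proof -
  assume I: "hinv N H" and i: "i < N" "v \<in> H ! i" "v \<noteq> Suc i"
  have v: "1 \<le> v" "v \<le> i" using hinv_D[OF I i(1)] i by auto
  have "v - 1 < N" using v i by auto
  from hinv_D[OF I this] have "v \<in> H ! (v - 1)" using v by auto
  hence "{v - 1, i} \<subseteq> {j. j < length H \<and> v \<in> H ! j}" using hinv_len[OF I] i \<open>v - 1 < N\<close> by auto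
  moreover have "card {v - 1, i} = 2" using v by auto
  ultimately show ?thesis unfolding hdeg_def
    by (metis card_mono finite_hdeg_set)
qed

lemma hdeg_snoc: "hdeg (H @ [e]) v = hdeg H v + (if v \<in> e then 1 else 0)"
proof -
  have "{i. i < length (H @ [e]) \<and> v \<in> (H @ [e]) ! i}
      = {i. i < length H \<and> v \<in> H ! i} \<union> (if v \<in> e then {length H} else {})"
    by (auto simp: nth_append less_Suc_eq)
  thus ?thesis unfolding hdeg_def by (simp add: card_insert_if)
qed

lemma hdeg_new: "hinv N H \<Longrightarrow> hdeg H (Suc N) = 0"
proof -
  assume I: "hinv N H"
  have "{i. i < length H \<and> Suc N \<in> H ! i} = {}"
  proof (intro equalityI subsetI)
    fix i assume "i \<in> {i. i < length H \<and> Suc N \<in> H ! i}"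
    hence "i < N" "Suc N \<in> H ! i" using hinv_len[OF I] by auto
    thus "i \<in> {}" using hinv_D[OF I] by fastforce
  qed auto
  thus ?thesis by (simp add: hdeg_def)
qed

lemma numdeg_step:
  assumes I: "hinv N H" and i: "i < N"
  shows "numdeg (Suc N) 1 (H @ [insert (Suc N) (H ! i)])
       = (if hdeg H (Suc i) = 1 then numdeg N 1 H else Suc (numdeg N 1 H))"
proof -
  let ?H' = "H @ [insert (Suc N) (H ! i)]"
  let ?A = "{v \<in> {1..N}. hdeg H v = 1}"
  have "{v \<in> {1..Suc N}. hdeg ?H' v = 1} = insert (Suc N) (?A - H ! i)"
  proof (intro set_eqI iffI)
    fix v assume v: "v \<in> {v \<in> {1..Suc N}. hdeg ?H' v = 1}"
    show "v \<in> insert (Suc N) (?A - H ! i)"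
    proof (cases "v = Suc N")
      case False
      hence "v \<in> {1..N}" using v by auto
      moreover have "hdeg ?H' v = hdeg H v + (if v \<in> H ! i then 1 else 0)"
        using False by (simp add: hdeg_snoc)
      ultimately show ?thesis using v hdeg_ge1[OF I, of v] by (auto split: if_splits)
    qed simp
  next
    fix v assume v: "v \<in> insert (Suc N) (?A - H ! i)"
    show "v \<in> {v \<in> {1..Suc N}. hdeg ?H' v = 1}"
    proof (cases "v = Suc N")
      case True thus ?thesis using hdeg_new[OF I] by (simp add: hdeg_snoc)
    next
      case False thus ?thesis using v by (auto simp: hdeg_snoc)
    qed
  qed
  moreover have "?A \<inter> H ! i = (if hdeg H (Suc i) = 1 then {Suc i} else {})"
  proof -
    have "Suc i \<in> H ! i" "Suc i \<in> {1..N}" using hinv_D[OF I i] i by auto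
    moreover have "\<And>v. v \<in> H ! i \<Longrightarrow> v \<noteq> Suc i \<Longrightarrow> hdeg H v \<noteq> 1"
      using hdeg_ge2[OF I i] by fastforce
    ultimately show ?thesis by auto
  qed
  moreover have "finite ?A" by simp
  ultimately show ?thesis unfolding numdeg_def
  proof -
    assume e: "{v \<in> {1..Suc N}. hdeg ?H' v = 1} = insert (Suc N) (?A - H ! i)"
      and e2: "?A \<inter> H ! i = (if hdeg H (Suc i) = 1 then {Suc i} else {})" and f: "finite ?A"
    have "card (?A - H ! i) = card ?A - card (?A \<inter> H ! i)"
      by (rule card_Diff_subset_Int) (simp add: f)
    moreover have "Suc N \<notin> ?A - H ! i" by auto
    moreover have "hdeg H (Suc i) = 1 \<Longrightarrow> card ?A \<ge> 1"
    proof -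
      assume "hdeg H (Suc i) = 1"
      hence "Suc i \<in> ?A" using e2 by (auto simp: set_eq_iff)
      hence "?A \<noteq> {}" by blast
      thus "card ?A \<ge> 1" using f by (simp add: Suc_le_eq card_gt_0_iff)
    qed
    ultimately show "card {v \<in> {1..Suc N}. hdeg ?H' v = 1} = (if hdeg H (Suc i) = 1 then card ?A else Suc (card ?A))"
      using e e2 f by (auto simp: card_insert_if)
  qed
qed

lemma count_deg1: "card {i \<in> {0..<N}. hdeg H (Suc i) = 1} = numdeg N 1 H"
proof -
  have "{v \<in> {1..N}. hdeg H v = 1} = Suc ` {i \<in> {0..<N}. hdeg H (Suc i) = 1}"
  proof (intro set_eqI iffI)
    fix v assume "v \<in> {v \<in> {1..N}. hdeg H v = 1}"
    thus "v \<in> Suc ` {i \<in> {0..<N}. hdeg H (Suc i) = 1}"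
      by (cases v) auto
  qed auto
  thus ?thesis unfolding numdeg_def by (simp add: card_image)
qed


lemma integrable_ind: "integrable (measure_pmf M) (indicator A :: _ \<Rightarrow> real)"
  by (rule measure_pmf.integrable_const_bound[where B=1]) (auto simp: indicator_def)

lemma prob_pmf_map: "measure_pmf.prob p {y. f y = x} = pmf (map_pmf f p) x"
  by (simp add: pmf_map vimage_def)

definition P :: "nat \<Rightarrow> nat \<Rightarrow> real" where
  "P N n = measure_pmf.prob (rrh N) {H. numdeg N 1 H = n}"

lemma inner_count:
  assumes I: "hinv (Suc m) H"
  shows "card ({0..<Suc m} \<inter> {i. numdeg (Suc (Suc m)) 1 (H @ [insert (Suc (Suc m)) (H ! i)]) = n})
       = (if numdeg (Suc m) 1 H = n then n else 0) + (if Suc (numdeg (Suc m) 1 H) = n then Suc (Suc m) - n else 0)"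
proof -
  let ?L = "numdeg (Suc m) 1 H"
  let ?Q = "\<lambda>i. hdeg H (Suc i) = 1"
  have eq: "\<And>i. i \<in> {0..<Suc m} \<Longrightarrow> numdeg (Suc (Suc m)) 1 (H @ [insert (Suc (Suc m)) (H ! i)]) = (if ?Q i then ?L else Suc ?L)"
    using numdeg_step[OF I] by simp
  have c1: "card {i \<in> {0..<Suc m}. ?Q i} = ?L" by (rule count_deg1)
  have c2: "card {i \<in> {0..<Suc m}. \<not> ?Q i} = Suc m - ?L"
  proof -
    have "card {i \<in> {0..<Suc m}. ?Q i} + card {i \<in> {0..<Suc m}. \<not> ?Q i} = card {0..<Suc m}"
    proof (subst card_Un_disjoint[symmetric])
      have "{i \<in> {0..<Suc m}. ?Q i} \<union> {i \<in> {0..<Suc m}. \<not> ?Q i} = {0..<Suc m}" by auto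
      thus "card ({i \<in> {0..<Suc m}. ?Q i} \<union> {i \<in> {0..<Suc m}. \<not> ?Q i}) = card {0..<Suc m}" by simp
    qed auto
    thus ?thesis using c1 by simp
  qed
  show ?thesis
  proof (cases "?L = n")
    case True
    hence "{0..<Suc m} \<inter> {i. numdeg (Suc (Suc m)) 1 (H @ [insert (Suc (Suc m)) (H ! i)]) = n} = {i \<in> {0..<Suc m}. ?Q i}"
      using eq by (auto split: if_splits)
    thus ?thesis using c1 True by simp
  next
    case False
    show ?thesis
    proof (cases "Suc ?L = n")
      case True
      hence "{0..<Suc m} \<inter> {i. numdeg (Suc (Suc m)) 1 (H @ [insert (Suc (Suc m)) (H ! i)]) = n} = {i \<in> {0..<Suc m}. \<not> ?Q i}"
        using eq by (auto split: if_splits)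
      thus ?thesis using c2 True by simp
    next
      case F2: False
      hence "{0..<Suc m} \<inter> {i. numdeg (Suc (Suc m)) 1 (H @ [insert (Suc (Suc m)) (H ! i)]) = n} = {}"
        using eq False by (auto split: if_splits)
      thus ?thesis using False F2 by simp
    qed
  qed
qed

lemma P_step:
  "P (Suc (Suc m)) n = real n / real (Suc m) * P (Suc m) n
     + (if 0 < n then real (Suc (Suc m) - n) / real (Suc m) * P (Suc m) (n - 1) else 0)"
proof -
  let ?L = "numdeg (Suc m) 1"
  let ?g = "\<lambda>H. map_pmf (\<lambda>i. H @ [insert (Suc (Suc m)) (H ! i)]) (pmf_of_set {0..<length H})"
  define c1 where "c1 = real n / real (Suc m)"
  define c2 where "c2 = real (Suc (Suc m) - n) / real (Suc m)"
  have "P (Suc (Suc m)) n = pmf (map_pmf (numdeg (Suc (Suc m)) 1) (bind_pmf (rrh (Suc m)) ?g)) n"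
    unfolding P_def prob_pmf_map by simp
  also have "\<dots> = (\<integral>H. pmf (map_pmf (numdeg (Suc (Suc m)) 1) (?g H)) n \<partial>measure_pmf (rrh (Suc m)))"
    by (simp add: map_bind_pmf pmf_bind)
  also have "\<dots> = (\<integral>H. c1 * indicator {H. ?L H = n} H + c2 * indicator {H. Suc (?L H) = n} H \<partial>measure_pmf (rrh (Suc m)))"
  proof (rule integral_cong_AE)
    show "AE H in measure_pmf (rrh (Suc m)). pmf (map_pmf (numdeg (Suc (Suc m)) 1) (?g H)) n
        = c1 * indicator {H. ?L H = n} H + c2 * indicator {H. Suc (?L H) = n} H"
    proof (rule AE_pmfI)
      fix H assume "H \<in> set_pmf (rrh (Suc m))"
      hence I: "hinv (Suc m) H" by (rule rrh_inv)
      hence len: "length H = Suc m" by (rule hinv_len)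
      have "pmf (map_pmf (numdeg (Suc (Suc m)) 1) (?g H)) n
          = measure_pmf.prob (pmf_of_set {0..<Suc m}) {i. numdeg (Suc (Suc m)) 1 (H @ [insert (Suc (Suc m)) (H ! i)]) = n}"
        unfolding len map_pmf_comp prob_pmf_map[symmetric] by (simp add: o_def)
      also have "\<dots> = real (card ({0..<Suc m} \<inter> {i. numdeg (Suc (Suc m)) 1 (H @ [insert (Suc (Suc m)) (H ! i)]) = n})) / real (Suc m)"
        by (subst measure_pmf_of_set) auto
      also have "\<dots> = c1 * indicator {H. ?L H = n} H + c2 * indicator {H. Suc (?L H) = n} H"
        unfolding inner_count[OF I] c1_def c2_def by (auto simp: indicator_def add_divide_distrib)
      finally show "pmf (map_pmf (numdeg (Suc (Suc m)) 1) (?g H)) n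
          = c1 * indicator {H. ?L H = n} H + c2 * indicator {H. Suc (?L H) = n} H" .
    qed
  qed simp_all
  also have "\<dots> = c1 * P (Suc m) n + c2 * measure_pmf.prob (rrh (Suc m)) {H. Suc (?L H) = n}"
    by (subst Bochner_Integration.integral_add) (auto simp: integrable_ind P_def)
  also have "measure_pmf.prob (rrh (Suc m)) {H. Suc (?L H) = n} = (if 0 < n then P (Suc m) (n - 1) else 0)"
    unfolding P_def by (cases n) auto
  finally show ?thesis unfolding c1_def c2_def by simp
qed


lemma P_one: "P (Suc 0) n = (if n = 1 then 1 else 0)"
proof -
  have "hdeg [{1}] 1 = 1" unfolding hdeg_def
  proof -
    have "{i. i < length [{1::nat}] \<and> 1 \<in> [{1::nat}] ! i} = {0}" by auto
    thus "card {i. i < length [{1::nat}] \<and> 1 \<in> [{1::nat}] ! i} = 1" by simp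
  qed
  hence "numdeg 1 1 [{1}] = 1" unfolding numdeg_def
    by (simp add: atLeastAtMost_singleton cong: conj_cong)
  thus ?thesis unfolding P_def by simp
qed

lemma P_formula: "P (Suc m) n = (if n = 0 then 0 else real (E m (n - 1)) / fact m)"
proof (induction m arbitrary: n)
  case 0 thus ?case by (simp add: P_one E_0)
next
  case (Suc m)
  show ?case
  proof (cases n)
    case 0 thus ?thesis by (simp add: P_step Suc.IH)
  next
    case (Suc k)
    have e: "real (E (Suc m) k) = real (k + 1) * real (E m k) + (if 0 < k then real (Suc m - k) * real (E m (k - 1)) else 0)"
      unfolding E_rec by (simp only: of_nat_add of_nat_mult if_distrib[of real] of_nat_0)
    have f: "(fact (Suc m) :: real) = real (Suc m) * fact m" by simp
    have "P (Suc (Suc m)) n = real (Suc k) / real (Suc m) * (real (E m k) / fact m)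
        + real (Suc (Suc m) - Suc k) / real (Suc m) * (if k = 0 then 0 else real (E m (k - 1)) / fact m)"
      using Suc by (simp add: P_step Suc.IH)
    also have "\<dots> = real (E (Suc m) k) / fact (Suc m)"
      unfolding e f by (cases "k = 0") (simp_all add: field_simps add_divide_distrib[symmetric])
    finally show ?thesis using Suc by simp
  qed
qed

theorem mainTheorem1:
  fixes N n :: nat
  assumes "N \<ge> 1" and "n \<ge> 1"
  shows "measure_pmf.prob (rrh N) {H. numdeg N 1 H = n}
         = real (eulerian (N - 1) (n - 1)) / fact (N - 1)"
proof -
  obtain m where m: "N = Suc m" using assms(1) by (cases N) auto
  show ?thesis using P_formula[of m n] assms(2) unfolding m P_def eulerian_E by simp
qed

end
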